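(* All kernels of an orientation of a claw-free graph have the same cardinality.
   Context: A graph is claw-free if no three vertices with a common neighbor form a stable set. An orientation of a graph orients each edge in exactly one direction (not necessarily clique-acyclic). A kernel of a digraph $D=(V,A)$ is a set $S$ of pairwise non-adjacent vertices such that every $u\in V\setminus S$ has an arc $(u,v)\in A$ with $v\in S$. *)

theory Defs
  imports Main
begin

definition simple_graph :: "'a set \<Rightarrow> ('a \<Rightarrow> 'a \<Rightarrow> bool) \<Rightarrow> bool" where
  "simple_graph V E \<longleftrightarrow> finite V \<and>
     (\<forall>u v. E u v \<longrightarrow> u \<in> V \<and> v \<in> V) \<and>
     (\<forall>u v. E u v \<longrightarrow> E v u) \<and> (\<forall>v. \<not> E v v)"

definition claw_free :: "'a set \<Rightarrow> ('a \<Rightarrow> 'a \<Rightarrow> bool) \<Rightarrow> bool" where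
  "claw_free V E \<longleftrightarrow>
     (\<forall>c\<in>V. \<forall>x\<in>V. \<forall>y\<in>V. \<forall>z\<in>V.
        E c x \<and> E c y \<and> E c z \<and> x \<noteq> y \<and> x \<noteq> z \<and> y \<noteq> z \<longrightarrow>
        E x y \<or> E x z \<or> E y z)"

definition orientation :: "'a set \<Rightarrow> ('a \<Rightarrow> 'a \<Rightarrow> bool) \<Rightarrow> ('a \<Rightarrow> 'a \<Rightarrow> bool) \<Rightarrow> bool" where
  "orientation V E A \<longleftrightarrow>
     (\<forall>u v. E u v \<longleftrightarrow> A u v \<or> A v u) \<and> (\<forall>u v. \<not> (A u v \<and> A v u))"

definition kernel :: "'a set \<Rightarrow> ('a \<Rightarrow> 'a \<Rightarrow> bool) \<Rightarrow> 'a set \<Rightarrow> bool" where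
  "kernel V A S \<longleftrightarrow> S \<subseteq> V \<and>
     (\<forall>u\<in>S. \<forall>v\<in>S. \<not> A u v) \<and>
     (\<forall>u\<in>V - S. \<exists>v\<in>S. A u v)"

end

theory Submission
  imports Defs
begin

lemma three_elems:
  assumes "finite X" "\<not> card X \<le> 2"
  shows "\<exists>x y z. x \<in> X \<and> y \<in> X \<and> z \<in> X \<and> x \<noteq> y \<and> x \<noteq> z \<and> y \<noteq> z"
proof -
  have "card X \<ge> 3" using assms by simp
  then obtain x where x: "x \<in> X" using assms by fastforce
  then have c1: "card (X - {x}) \<ge> 2" using assms by simp
  then have "X - {x} \<noteq> {}" by (metis card.empty not_numeral_le_zero)
  then obtain y where y: "y \<in> X - {x}" by blast
  then have "card (X - {x} - {y}) \<ge> 1" using c1 assms by simp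
  then have "X - {x} - {y} \<noteq> {}" by (metis card.empty not_one_le_zero)
  then obtain z where z: "z \<in> X - {x} - {y}" by blast
  show ?thesis using x y z by blast
qed

lemma nbr_bound:
  assumes sg: "simple_graph V E" and cf: "claw_free V E" and ori: "orientation V E A"
    and kT: "kernel V A T" and u: "u \<in> V" and that: "Q \<subseteq> T"
  shows "card {v \<in> Q. E u v} \<le> 2"
proof (rule ccontr)
  assume h: "\<not> ?thesis"
  have fin: "finite {v \<in> Q. E u v}"
  proof (rule finite_subset[of _ V])
    show "{v \<in> Q. E u v} \<subseteq> V" using that kT unfolding kernel_def by auto
    show "finite V" using sg unfolding simple_graph_def by blast
  qed
  obtain x y z where xyz: "x \<in> {v \<in> Q. E u v}" "y \<in> {v \<in> Q. E u v}" "z \<in> {v \<in> Q. E u v}"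
    "x \<noteq> y" "x \<noteq> z" "y \<noteq> z"
    using three_elems[OF fin h] by blast
  have inV: "x \<in> V" "y \<in> V" "z \<in> V" using xyz sg unfolding simple_graph_def by auto
  have "E x y \<or> E x z \<or> E y z"
    using cf u inV xyz unfolding claw_free_def by blast
  moreover have "x \<in> T" "y \<in> T" "z \<in> T" using xyz that by auto
  ultimately show False using kT ori unfolding kernel_def orientation_def by blast
qed

theorem proposition4:
  fixes V :: "'a set" and E A :: "'a \<Rightarrow> 'a \<Rightarrow> bool" and S T :: "'a set"
  assumes "simple_graph V E"
    and "claw_free V E"
    and "orientation V E A"
    and "kernel V A S"
    and "kernel V A T"
  shows "card S = card T"
proof -
  note sg = assms(1) and cf = assms(2) and ori = assms(3) and kS = assms(4) and kT = assms(5)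
  define P where "P = S - T"
  define Q where "Q = T - S"
  define R where "R = {(u, v). u \<in> P \<and> v \<in> Q \<and> E u v}"
  have finV: "finite V" using sg unfolding simple_graph_def by blast
  have SV: "S \<subseteq> V" and TV: "T \<subseteq> V" using kS kT unfolding kernel_def by auto
  have finS: "finite S" and finT: "finite T" using SV TV finV finite_subset by auto
  have finP: "finite P" and finQ: "finite Q" using finS finT P_def Q_def by auto
  have outP: "\<forall>x\<in>P. \<exists>y. y \<in> Q \<and> A x y"
  proof
    fix x assume x: "x \<in> P"
    then have "x \<in> V - T" using P_def SV by auto
    then obtain y where y: "y \<in> T" "A x y" using kT unfolding kernel_def by blast
    have "y \<notin> S" using y x kS unfolding kernel_def P_def by blast
    then show "\<exists>y. y \<in> Q \<and> A x y" using y Q_def by blast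
  qed
  have outQ: "\<forall>x\<in>Q. \<exists>y. y \<in> P \<and> A x y"
  proof
    fix x assume x: "x \<in> Q"
    then have "x \<in> V - S" using Q_def TV by auto
    then obtain y where y: "y \<in> S" "A x y" using kS unfolding kernel_def by blast
    have "y \<notin> T" using y x kT unfolding kernel_def Q_def by blast
    then show "\<exists>y. y \<in> P \<and> A x y" using y P_def by blast
  qed
  define f where "f x = (if x \<in> P then (SOME y. y \<in> Q \<and> A x y) else (SOME y. y \<in> P \<and> A x y))" for x
  have fP: "f x \<in> Q \<and> A x (f x)" if "x \<in> P" for x
    using someI_ex[OF outP[rule_format, OF that]] that f_def by simp
  have fQ: "f x \<in> P \<and> A x (f x)" if "x \<in> Q" for x
  proof -
    have "x \<notin> P" using that P_def Q_def by auto
    then show ?thesis using someI_ex[OF outQ[rule_format, OF that]] f_def by simp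
  qed
  define g where "g x = (if x \<in> P then (x, f x) else (f x, x))" for x
  have EA: "\<And>u v. A u v \<Longrightarrow> E u v" "\<And>u v. A u v \<Longrightarrow> E v u" and asym: "\<And>u v. A u v \<Longrightarrow> \<not> A v u"
    using ori unfolding orientation_def by blast+
  have PQdisj: "P \<inter> Q = {}" using P_def Q_def by auto
  have inj: "inj_on g (P \<union> Q)"
  proof (rule inj_onI)
    fix x y assume x: "x \<in> P \<union> Q" and y: "y \<in> P \<union> Q" and eq: "g x = g y"
    show "x = y"
    proof (cases "x \<in> P")
      case True
      show ?thesis
      proof (cases "y \<in> P")
        case True then show ?thesis using \<open>x \<in> P\<close> eq g_def by simp
      next
        case False
        then have "y \<in> Q" using y by blast
        then have "x = f y" "f x = y" using eq g_def \<open>x \<in> P\<close> False by auto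
        then have "A x y" "A y x" using fP[OF \<open>x \<in> P\<close>] fQ[OF \<open>y \<in> Q\<close>] by auto
        then show ?thesis using asym by blast
      qed
    next
      case False
      then have xQ: "x \<in> Q" using x by blast
      show ?thesis
      proof (cases "y \<in> P")
        case True
        then have "y = f x" "f y = x" using eq g_def False by auto
        then have "A x y" "A y x" using fP[OF \<open>y \<in> P\<close>] fQ[OF xQ] by auto
        then show ?thesis using asym by blast
      next
        case False then show ?thesis using \<open>x \<notin> P\<close> eq g_def by simp
      qed
    qed
  qed
  have gR: "g ` (P \<union> Q) \<subseteq> R"
  proof
    fix p assume "p \<in> g ` (P \<union> Q)"
    then obtain x where x: "x \<in> P \<union> Q" "p = g x" by blast
    show "p \<in> R"
    proof (cases "x \<in> P")
      case True then show ?thesis using fP[OF True] x g_def R_def EA by auto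
    next
      case False then have "x \<in> Q" using x by blast
      then show ?thesis using fQ[OF \<open>x \<in> Q\<close>] x g_def R_def EA False by auto
    qed
  qed
  have RsubP: "R \<subseteq> Sigma P (\<lambda>u. {v \<in> Q. E u v})" using R_def by auto
  have finSig: "finite (Sigma P (\<lambda>u. {v \<in> Q. E u v}))" using finP finQ by auto
  have finR: "finite R" using RsubP finSig finite_subset by blast
  have lower: "card P + card Q \<le> card R"
  proof -
    have "card P + card Q = card (P \<union> Q)" using card_Un_disjoint finP finQ PQdisj by metis
    also have "\<dots> = card (g ` (P \<union> Q))" using card_image[OF inj] by simp
    also have "\<dots> \<le> card R" using card_mono[OF finR gR] .
    finally show ?thesis .
  qed
  have QT: "Q \<subseteq> T" and PS: "P \<subseteq> S" using P_def Q_def by auto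
  have up1: "card R \<le> 2 * card P"
  proof -
    have "card R \<le> card (Sigma P (\<lambda>u. {v \<in> Q. E u v}))" using card_mono[OF finSig RsubP] .
    also have "\<dots> = (\<Sum>u\<in>P. card {v \<in> Q. E u v})" using finP finQ by (simp add: card_SigmaI)
    also have "\<dots> \<le> (\<Sum>u\<in>P. 2)"
      by (rule sum_mono, rule nbr_bound[OF sg cf ori kT], use PS SV in auto) (use QT in auto)
    finally show ?thesis by simp
  qed
  have up2: "card R \<le> 2 * card Q"
  proof -
    have "R \<subseteq> (\<lambda>(v, u). (u, v)) ` Sigma Q (\<lambda>v. {u \<in> P. E v u})"
      using R_def sg unfolding simple_graph_def by force
    moreover have fs: "finite (Sigma Q (\<lambda>v. {u \<in> P. E v u}))" using finP finQ by auto
    ultimately have "card R \<le> card ((\<lambda>(v, u). (u, v)) ` Sigma Q (\<lambda>v. {u \<in> P. E v u}))"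
      by (intro card_mono) auto
    also have "\<dots> \<le> card (Sigma Q (\<lambda>v. {u \<in> P. E v u}))" using fs by (rule card_image_le)
    finally have "card R \<le> card (Sigma Q (\<lambda>v. {u \<in> P. E v u}))" .
    also have "\<dots> = (\<Sum>v\<in>Q. card {u \<in> P. E v u})" using finP finQ by (simp add: card_SigmaI)
    also have "\<dots> \<le> (\<Sum>v\<in>Q. 2)"
      by (rule sum_mono, rule nbr_bound[OF sg cf ori kS], use QT TV in auto) (use PS in auto)
    finally show ?thesis by simp
  qed
  have "card P = card Q" using lower up1 up2 by linarith
  moreover have "card S = card (S \<inter> T) + card P"
  proof -
    have "S = (S \<inter> T) \<union> P" "(S \<inter> T) \<inter> P = {}" using P_def by auto
    then show ?thesis using finS by (metis card_Un_disjoint finite_Un)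
  qed
  moreover have "card T = card (S \<inter> T) + card Q"
  proof -
    have "T = (S \<inter> T) \<union> Q" "(S \<inter> T) \<inter> Q = {}" using Q_def by auto
    then show ?thesis using finT by (metis card_Un_disjoint finite_Un)
  qed
  ultimately show ?thesis by simp
qed

end
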